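(* Let $h$ be a fixed-point-free isometry of order $3$ of the $E_8$ root lattice. In $E_8\perp E_8$ let $M=\{(x,x):x\in E_8\}$ and $M'=\{(hx,x):x\in E_8\}$. Then $M+M'$ is isometric to $A_2\otimes_{\mathbb Z}E_8$.
   Context: $A_2\otimes E_8$ denotes the tensor product of the root lattices $A_2$ and $E_8$ with the product bilinear form. *)

theory Defs
  imports "HOL-Analysis.Analysis"
begin

definition E8 :: "(real^8) set" where
  "E8 = {x. ((\<forall>i. x$i \<in> \<int>) \<or> (\<forall>i. x$i - 1/2 \<in> \<int>)) \<and> (\<Sum>i\<in>UNIV. x$i) / 2 \<in> \<int>}"

definition A2 :: "(real^3) set" where
  "A2 = {a. (\<forall>i. a$i \<in> \<int>) \<and> (\<Sum>i\<in>UNIV. a$i) = 0}"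

inductive_set zgen :: "'a::ab_group_add set \<Rightarrow> 'a set" for S where
  zero: "0 \<in> zgen S"
| gen: "x \<in> S \<Longrightarrow> x \<in> zgen S"
| add: "x \<in> zgen S \<Longrightarrow> y \<in> zgen S \<Longrightarrow> x + y \<in> zgen S"
| neg: "x \<in> zgen S \<Longrightarrow> - x \<in> zgen S"

text \<open>Outer product a \<otimes> b as an m x n real matrix; the Frobenius inner product on
  matrices satisfies <a\<otimes>b, c\<otimes>d> = <a,c><b,d> (product bilinear form).\<close>
definition outer :: "real^'m \<Rightarrow> real^'n \<Rightarrow> real^'n^'m" where
  "outer a b = (\<chi> i. \<chi> j. a$i * b$j)"

definition lattice_tensor :: "(real^'m) set \<Rightarrow> (real^'n) set \<Rightarrow> (real^'n^'m) set" where
  "lattice_tensor L K = zgen {outer a b | a b. a \<in> L \<and> b \<in> K}"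

text \<open>Isometry of lattices (bilinear form = inner product of the ambient space).\<close>
definition lattice_isometric :: "'a::real_inner set \<Rightarrow> 'b::real_inner set \<Rightarrow> bool" where
  "lattice_isometric L K \<longleftrightarrow> (\<exists>f. bij_betw f L K \<and>
     (\<forall>x\<in>L. \<forall>y\<in>L. f (x + y) = f x + f y) \<and>
     (\<forall>x\<in>L. \<forall>y\<in>L. inner (f x) (f y) = inner x y))"

end

theory Submission imports Defs begin

lemma E8_zero: "0 \<in> E8" by (simp add: E8_def)

lemma E8_add: assumes "x \<in> E8" "y \<in> E8" shows "x + y \<in> E8"
proof -
  have s: "(\<Sum>i\<in>UNIV. (x+y)$i) / 2 = (\<Sum>i\<in>UNIV. x$i)/2 + (\<Sum>i\<in>UNIV. y$i)/2"
    by (simp add: sum.distrib add_divide_distrib)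
  have c: "(\<forall>i. (x+y)$i \<in> \<int>) \<or> (\<forall>i. (x+y)$i - 1/2 \<in> \<int>)"
  proof -
    have hx: "(\<forall>i. x$i \<in> \<int>) \<or> (\<forall>i. x$i - 1/2 \<in> \<int>)" and hy: "(\<forall>i. y$i \<in> \<int>) \<or> (\<forall>i. y$i - 1/2 \<in> \<int>)"
      using assms by (auto simp: E8_def)
    have e1: "(x+y)$i = x$i + y$i" for i by simp
    have e2: "x$i + y$i = (x$i - 1/2) + (y$i - 1/2) + 1" for i by simp
    have e3: "x$i + y$i - 1/2 = (x$i - 1/2) + y$i" for i by simp
    have e4: "x$i + y$i - 1/2 = x$i + (y$i - 1/2)" for i by simp
    from hx hy show ?thesis
    proof (elim disjE)
      assume a: "\<forall>i. x$i \<in> \<int>" and b: "\<forall>i. y$i \<in> \<int>"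
      show ?thesis by (rule disjI1) (metis e1 a b Ints_add)
    next
      assume a: "\<forall>i. x$i \<in> \<int>" and b: "\<forall>i. y$i - 1/2 \<in> \<int>"
      show ?thesis by (rule disjI2) (metis e1 e4 a b Ints_add)
    next
      assume a: "\<forall>i. x$i - 1/2 \<in> \<int>" and b: "\<forall>i. y$i \<in> \<int>"
      show ?thesis by (rule disjI2) (metis e1 e3 a b Ints_add)
    next
      assume a: "\<forall>i. x$i - 1/2 \<in> \<int>" and b: "\<forall>i. y$i - 1/2 \<in> \<int>"
      show ?thesis by (rule disjI1) (metis e1 e2 a b Ints_add Ints_1)
    qed
  qed
  have "(\<Sum>i\<in>UNIV. (x+y)$i) / 2 \<in> \<int>"
    unfolding s using assms by (auto simp: E8_def intro!: Ints_add)
  then show ?thesis using c unfolding E8_def by blast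
qed

lemma E8_neg: assumes "x \<in> E8" shows "- x \<in> E8"
proof -
  have s: "(\<Sum>i\<in>UNIV. (-x)$i) / 2 = - ((\<Sum>i\<in>UNIV. x$i)/2)"
    by (simp add: sum_negf)
  have e: "- x$i - 1/2 = - (x$i - 1/2) - 1" for i by simp
  have hx: "(\<forall>i. x$i \<in> \<int>) \<or> (\<forall>i. x$i - 1/2 \<in> \<int>)" using assms by (auto simp: E8_def)
  hence "(\<forall>i. (-x)$i \<in> \<int>) \<or> (\<forall>i. (-x)$i - 1/2 \<in> \<int>)"
    by (auto simp only: vector_uminus_component e intro: Ints_minus Ints_diff Ints_1)
  moreover have "(\<Sum>i\<in>UNIV. (-x)$i) / 2 \<in> \<int>"
    unfolding s using assms by (auto simp: E8_def intro!: Ints_minus)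
  ultimately show ?thesis unfolding E8_def by blast
qed

lemma E8_diff: assumes "x \<in> E8" "y \<in> E8" shows "x - y \<in> E8"
proof -
  have "x - y = x + (- y)" by simp
  then show ?thesis using E8_add[OF assms(1) E8_neg[OF assms(2)]] by simp
qed

lemma E8_nat: assumes "x \<in> E8" shows "real n *\<^sub>R x \<in> E8"
proof (induction n)
  case 0 then show ?case using E8_zero by simp
next
  case (Suc n)
  have "real (Suc n) *\<^sub>R x = real n *\<^sub>R x + x" by (simp add: scaleR_left_distrib)
  then show ?case using E8_add[OF Suc assms] by simp
qed

lemma E8_int: assumes "x \<in> E8" "k \<in> \<int>" shows "k *\<^sub>R x \<in> E8"
proof -
  obtain n :: int where k: "k = of_int n" using assms(2) by (auto elim: Ints_cases)
  show ?thesis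
  proof (cases "n \<ge> 0")
    case True then have "k = real (nat n)" using k by simp
    then show ?thesis using E8_nat[OF assms(1), of "nat n"] by simp
  next
    case False then have "k = - real (nat (-n))" using k by simp
    then show ?thesis using E8_neg[OF E8_nat[OF assms(1), of "nat (-n)"]] by simp
  qed
qed

definition al :: "real^3" where "al = (\<chi> i. if i = 1 then 1 else if i = 2 then -1 else 0)"
definition be :: "real^3" where "be = (\<chi> i. if i = 1 then 0 else if i = 2 then 1 else -1)"

lemma al_comp [simp]: "al$1 = 1" "al$2 = -1" "al$3 = 0" by (simp_all add: al_def)
lemma be_comp [simp]: "be$1 = 0" "be$2 = 1" "be$3 = -1" by (simp_all add: be_def)

lemma outer_row: "outer a b $ i = a$i *\<^sub>R b"
  by (simp add: outer_def vec_eq_iff)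

lemma outer_inner: "inner (outer a u) (outer b v) = inner a b * inner u v"
proof -
  have "inner (outer a u) (outer b v) = (\<Sum>i\<in>UNIV. inner (a$i *\<^sub>R u) (b$i *\<^sub>R v))"
    unfolding inner_vec_def[of "outer a u" "outer b v"] outer_row ..
  also have "\<dots> = (\<Sum>i\<in>UNIV. (a$i * b$i) * inner u v)" by (simp add: mult_ac)
  also have "\<dots> = inner a b * inner u v"
    unfolding inner_vec_def[of a b] sum_distrib_right by (rule sum.cong) simp_all
  finally show ?thesis .
qed

lemma outer_add2: "outer a (u + v) = outer a u + outer a v"
  by (simp add: vec_eq_iff outer_row scaleR_right_distrib)

lemma outer_neg2: "outer a (- u) = - outer a u"
  by (simp add: vec_eq_iff outer_row)

lemma al_al: "inner al al = 2" by (simp add: inner_vec_def sum_3)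
lemma al_be: "inner al be = -1" by (simp add: inner_vec_def sum_3)
lemma be_al: "inner be al = -1" by (simp add: inner_vec_def sum_3)
lemma be_be: "inner be be = 2" by (simp add: inner_vec_def sum_3)

lemma al_A2: "al \<in> A2" by (simp add: A2_def sum_3 forall_3)
lemma be_A2: "be \<in> A2" by (simp add: A2_def sum_3 forall_3)

lemma row1: "(outer al u + outer be v) $ 1 = u" by (simp add: outer_row)
lemma row3: "(outer al u + outer be v) $ 3 = - v" by (simp add: outer_row)

lemma A2_decomp: assumes "a \<in> A2"
  shows "outer a b = outer al (a$1 *\<^sub>R b) + outer be ((- a$3) *\<^sub>R b)"
proof -
  have s: "a$1 + a$2 + a$3 = 0" using assms by (simp add: A2_def sum_3)
  then have "a$2 = -(a$1) + - (a$3)" by simp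
  then have e2: "a$2 *\<^sub>R b = (-(a$1) + -(a$3)) *\<^sub>R b" by simp
  have r1: "(outer a b)$1 = (outer al (a$1 *\<^sub>R b) + outer be ((- a$3) *\<^sub>R b))$1"
    by (simp add: outer_row)
  have r2: "(outer a b)$2 = (outer al (a$1 *\<^sub>R b) + outer be ((- a$3) *\<^sub>R b))$2"
    unfolding vector_add_component outer_row al_comp be_comp e2 by (simp add: scaleR_left_diff_distrib)
  have r3: "(outer a b)$3 = (outer al (a$1 *\<^sub>R b) + outer be ((- a$3) *\<^sub>R b))$3"
    by (simp add: outer_row)
  show ?thesis using r1 r2 r3 by (simp only: vec_eq_iff[of "outer a b"] forall_3)
qed

lemma tensor_char:
  "lattice_tensor A2 E8 = {outer al u + outer be v | u v. u \<in> E8 \<and> v \<in> E8}"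
proof
  show "lattice_tensor A2 E8 \<subseteq> {outer al u + outer be v | u v. u \<in> E8 \<and> v \<in> E8}"
  proof
    fix z assume "z \<in> lattice_tensor A2 E8"
    then have "z \<in> zgen {outer a b | a b. a \<in> A2 \<and> b \<in> E8}" by (simp add: lattice_tensor_def)
    then show "z \<in> {outer al u + outer be v | u v. u \<in> E8 \<and> v \<in> E8}"
    proof (induction rule: zgen.induct)
      case zero
      have "(0::real^8^3) = outer al 0 + outer be 0" by (simp add: vec_eq_iff outer_row)
      then show ?case using E8_zero by blast
    next
      case (gen x)
      then obtain a b where x: "x = outer a b" "a \<in> A2" "b \<in> E8" by blast
      have i1: "a$1 \<in> \<int>" and i3: "- a$3 \<in> \<int>" using x(2) by (auto simp: A2_def)
      show ?case using A2_decomp[OF x(2), of b] x(1) E8_int[OF x(3) i1] E8_int[OF x(3) i3] by blast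
    next
      case (add x y)
      then obtain u v u' v' where "x = outer al u + outer be v" "u \<in> E8" "v \<in> E8"
        "y = outer al u' + outer be v'" "u' \<in> E8" "v' \<in> E8" by blast
      then have "x + y = outer al (u + u') + outer be (v + v')" "u + u' \<in> E8" "v + v' \<in> E8"
        by (simp_all add: outer_add2 E8_add algebra_simps)
      then show ?case by blast
    next
      case (neg x)
      then obtain u v where "x = outer al u + outer be v" "u \<in> E8" "v \<in> E8" by blast
      then have "- x = outer al (- u) + outer be (- v)" "- u \<in> E8" "- v \<in> E8"
        by (simp_all add: outer_neg2 E8_neg)
      then show ?case by blast
    qed
  qed
next
  show "{outer al u + outer be v | u v. u \<in> E8 \<and> v \<in> E8} \<subseteq> lattice_tensor A2 E8"
  proof
    fix z assume "z \<in> {outer al u + outer be v | u v. u \<in> E8 \<and> v \<in> E8}"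
    then obtain u v where z: "z = outer al u + outer be v" "u \<in> E8" "v \<in> E8" by blast
    have "outer al u \<in> zgen {outer a b | a b. a \<in> A2 \<and> b \<in> E8}"
      using z al_A2 by (blast intro: zgen.gen)
    moreover have "outer be v \<in> zgen {outer a b | a b. a \<in> A2 \<and> b \<in> E8}"
      using z be_A2 by (blast intro: zgen.gen)
    ultimately show "z \<in> lattice_tensor A2 E8"
      unfolding lattice_tensor_def z(1) by (rule zgen.add)
  qed
qed

theorem lemma2p7:
  fixes h :: "real^8 \<Rightarrow> real^8"
  assumes iso_bij: "bij_betw h E8 E8"
    and iso_add: "\<forall>x\<in>E8. \<forall>y\<in>E8. h (x + y) = h x + h y"
    and iso_inner: "\<forall>x\<in>E8. \<forall>y\<in>E8. inner (h x) (h y) = inner x y"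
    and order3: "\<forall>x\<in>E8. h (h (h x)) = x"
    and not_id: "\<exists>x\<in>E8. h x \<noteq> x"
    and fpf: "\<forall>x\<in>E8. h x = x \<longrightarrow> x = 0"
  shows "lattice_isometric
           {m + m' | m m'. m \<in> {(x, x) | x. x \<in> E8} \<and> m' \<in> {(h x, x) | x. x \<in> E8}}
           (lattice_tensor A2 E8)"
proof -
  have hE: "h x \<in> E8" if "x \<in> E8" for x
    using iso_bij that by (auto simp: bij_betw_def)
  have hinj: "inj_on h E8" using iso_bij by (simp add: bij_betw_def)
  have hadd: "h (x + y) = h x + h y" if "x \<in> E8" "y \<in> E8" for x y using iso_add that by blast
  have hsum: "h (h x) + h x + x = 0" if x: "x \<in> E8" for x
  proof -
    let ?z = "h (h x) + h x + x"
    have zE: "?z \<in> E8" using x hE E8_add by blast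
    have "h ?z = h (h (h x)) + h (h x) + h x"
      using hadd hE E8_add x by metis
    also have "\<dots> = ?z" using order3 x by simp
    finally show ?thesis using fpf zE by blast
  qed
  have hh: "h (h x) = - h x - x" if "x \<in> E8" for x
    using hsum[OF that] by (simp add: algebra_simps eq_neg_iff_add_eq_0)
  have hinn2: "inner x (h (h y)) = inner (h x) y" if "x \<in> E8" "y \<in> E8" for x y
    using iso_inner hE that order3 by metis
  have uniq: "x = x' \<and> y = y'"
    if E: "x \<in> E8" "y \<in> E8" "x' \<in> E8" "y' \<in> E8"
      and e1: "x + h y = x' + h y'" and e2: "x + y = x' + y'" for x y x' y'
  proof -
    define d where "d = y - y'"
    have dE: "d \<in> E8" using E8_diff E d_def by blast
    have "h y = h (d + y')" by (simp add: d_def)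
    also have "\<dots> = h d + h y'" using hadd dE E by blast
    finally have hy: "h y = h d + h y'" .
    have "x - x' = - d" using e2 by (simp add: d_def algebra_simps)
    moreover have "x - x' = h y' - h y" using e1 by (simp add: algebra_simps)
    ultimately have "h d = d" using hy by simp
    then have "d = 0" using fpf dE by blast
    then show ?thesis using e2 d_def by simp
  qed
  define L where "L = {m + m' | m m'. m \<in> {(x, x) | x. x \<in> E8} \<and> m' \<in> {(h x, x) | x. x \<in> E8}}"
  have L_eq: "L = {(x + h y, x + y) | x y. x \<in> E8 \<and> y \<in> E8}"
    unfolding L_def by auto
  define rep where "rep p = (SOME xy. fst xy \<in> E8 \<and> snd xy \<in> E8 \<and> p = (fst xy + h (snd xy), fst xy + snd xy))" for p
  have rep_eq: "rep (x + h y, x + y) = (x, y)" if "x \<in> E8" "y \<in> E8" for x y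
  proof -
    let ?P = "\<lambda>xy. fst xy \<in> E8 \<and> snd xy \<in> E8 \<and> (x + h y, x + y) = (fst xy + h (snd xy), fst xy + snd xy)"
    have "?P (x, y)" using that by simp
    then have "?P (rep (x + h y, x + y))" unfolding rep_def by (rule someI)
    then show ?thesis using uniq[OF that] by (metis prod.collapse prod.inject)
  qed
  define f where "f p = outer al (h (fst (rep p))) + outer be (snd (rep p))" for p
  have fE: "f (x + h y, x + y) = outer al (h x) + outer be y" if "x \<in> E8" "y \<in> E8" for x y
    using rep_eq[OF that] by (simp add: f_def)
  have inj: "inj_on f L"
  proof (rule inj_onI)
    fix p q assume pq: "p \<in> L" "q \<in> L" and fpq: "f p = f q"
    from pq obtain x y x' y' where p: "p = (x + h y, x + y)" "x \<in> E8" "y \<in> E8"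
      and q: "q = (x' + h y', x' + y')" "x' \<in> E8" "y' \<in> E8" unfolding L_eq by blast
    have eq: "outer al (h x) + outer be y = outer al (h x') + outer be y'"
      using fpq fE p q by simp
    have "h x = h x'" using arg_cong[OF eq, of "\<lambda>z. z $ 1"] by (simp only: row1)
    then have "x = x'" using hinj p q by (auto dest: inj_onD)
    moreover have "y = y'" using arg_cong[OF eq, of "\<lambda>z. z $ 3"] by (simp only: row3) simp
    ultimately show "p = q" using p q by simp
  qed
  have img: "f ` L = lattice_tensor A2 E8"
    unfolding tensor_char
  proof
    show "f ` L \<subseteq> {outer al u + outer be v | u v. u \<in> E8 \<and> v \<in> E8}"
      unfolding L_eq using fE hE by fastforce
  next
    show "{outer al u + outer be v | u v. u \<in> E8 \<and> v \<in> E8} \<subseteq> f ` L"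
    proof
      fix z assume "z \<in> {outer al u + outer be v | u v. u \<in> E8 \<and> v \<in> E8}"
      then obtain u v where z: "z = outer al u + outer be v" "u \<in> E8" "v \<in> E8" by blast
      have xE: "h (h u) \<in> E8" using hE z by blast
      have "f (h (h u) + h v, h (h u) + v) = z"
        using fE[OF xE z(3)] order3 z by simp
      moreover have "(h (h u) + h v, h (h u) + v) \<in> L" unfolding L_eq using xE z by blast
      ultimately show "z \<in> f ` L" by force
    qed
  qed
  have addf: "f (p + q) = f p + f q" if pqL: "p \<in> L" "q \<in> L" for p q
  proof -
    obtain x y x' y' where p: "p = (x + h y, x + y)" "x \<in> E8" "y \<in> E8"
      and q: "q = (x' + h y', x' + y')" "x' \<in> E8" "y' \<in> E8" using pqL unfolding L_eq by blast
    have "p + q = ((x + x') + h (y + y'), (x + x') + (y + y'))"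
      using p q hadd by (simp add: algebra_simps)
    moreover have "f ((x + x') + h (y + y'), (x + x') + (y + y')) = outer al (h (x + x')) + outer be (y + y')"
      using fE E8_add p q by blast
    ultimately have "f (p + q) = outer al (h (x + x')) + outer be (y + y')" by simp
    also have "\<dots> = f p + f q"
      using fE p q hadd by (simp add: outer_add2 algebra_simps)
    finally show ?thesis .
  qed
  have innf: "inner (f p) (f q) = inner p q" if pqL: "p \<in> L" "q \<in> L" for p q
  proof -
    obtain x y x' y' where p: "p = (x + h y, x + y)" "x \<in> E8" "y \<in> E8"
      and q: "q = (x' + h y', x' + y')" "x' \<in> E8" "y' \<in> E8" using pqL unfolding L_eq by blast
    have i1: "inner (h x) (h x') = inner x x'" "inner (h y) (h y') = inner y y'"
      using iso_inner p q by auto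
    have i2: "inner x (h y') + inner x y' = - inner (h x) y'"
    proof -
      have "inner x (h (h y')) = inner x (- h y' - y')" using hh q by simp
      then show ?thesis using hinn2[OF p(2) q(3)] by (simp add: inner_diff_right)
    qed
    have i3: "inner (h y) x' + inner y x' = - inner y (h x')"
    proof -
      have "inner x' (h (h y)) = inner x' (- h y - y)" using hh p by simp
      then show ?thesis using hinn2[OF q(2) p(3)] by (simp add: inner_diff_right inner_commute)
    qed
    have "inner (f p) (f q) = inner (outer al (h x) + outer be y) (outer al (h x') + outer be y')"
      using fE p q by simp
    also have "\<dots> = 2 * inner (h x) (h x') - inner (h x) y' - inner y (h x') + 2 * inner y y'"
      by (simp add: inner_add_left inner_add_right outer_inner al_al al_be be_al be_be)
    also have "\<dots> = inner p q"
      using i1 i2 i3 p q by (simp add: inner_add_left inner_add_right)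
    finally show ?thesis .
  qed
  show ?thesis
    unfolding lattice_isometric_def L_def[symmetric]
    using inj img addf innf by (auto simp: bij_betw_def)
qed

end
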